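(* Let $\alpha>-1$, $b>1$ and $\beta=\frac{2\cos^{-1}(1/b)}{\pi}\in(0,1)$. There exist a holomorphic map $\phi:\mathbb{D}\to\mathbb{D}$ with $\phi(\mathbb{D})\subset\Gamma(1,b)$ and a constant $C>0$ (depending only on $\alpha$, $\phi$ and $b$) such that $$v_\alpha\big(\phi^{-1}(S(1,h))\big)\ge C\,h^{(2+\alpha)/\beta}$$ for all sufficiently small $h>0$.
   Context: $\mathbb{D}$ is the open unit disc of $\mathbb{C}$. $\Gamma(1,b)=\{z\in\mathbb{D}:|1-z|<\frac b2(1-|z|^2)\}$ is the nontangential approach region at $1$. For $0<h<1$, $S(1,h)=\{z\in\mathbb{D}:|1-z|<h\}$. For $\alpha>-1$, $dv_\alpha(z)=c_\alpha(1-|z|^2)^\alpha\,dA(z)$ is the weighted area measure on $\mathbb{D}$ normalized to be a probability measure. *)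

theory Defs
  imports "HOL-Analysis.Analysis"
begin

definition Gamma_region :: "complex \<Rightarrow> real \<Rightarrow> complex set" where
  "Gamma_region \<zeta> b = {z \<in> ball 0 1. cmod (\<zeta> - z) < b / 2 * (1 - (cmod z)\<^sup>2)}"

definition S_region :: "complex \<Rightarrow> real \<Rightarrow> complex set" where
  "S_region \<zeta> h = {z \<in> ball 0 1. cmod (\<zeta> - z) < h}"

text \<open>Normalizing constant c_alpha: the integral of (1-|z|^2)^alpha over the disc is pi/(alpha+1).\<close>
definition c_alpha :: "real \<Rightarrow> real" where
  "c_alpha \<alpha> = (\<alpha> + 1) / pi"

definition v_alpha :: "real \<Rightarrow> complex measure" where
  "v_alpha \<alpha> = density lborel
     (\<lambda>z. ennreal (indicator (ball (0::complex) 1) z * c_alpha \<alpha> * (1 - (cmod z)\<^sup>2) powr \<alpha>))"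

definition beta_of :: "real \<Rightarrow> real" where
  "beta_of b = 2 * arccos (1 / b) / pi"

end

theory Submission
  imports Defs
begin

lemma Vprops:
  fixes b \<beta> :: real and z :: complex
  assumes b: "b > 1" and bt: "\<beta> = 2 * arccos (1 / b) / pi" and z: "cmod z < 1"
  defines "v \<equiv> exp (complex_of_real \<beta> * Ln (1 - z))"
  shows "cmod v = cmod (1 - z) powr \<beta>" "b * Re v \<ge> cmod v" "cmod v > 0"
proof -
  have u0: "Re (1 - z) > 0" using z complex_Re_le_cmod[of z] by simp
  hence unz: "1 - z \<noteq> 0" by auto
  have im: "\<bar>Im (Ln (1 - z))\<bar> < pi/2" using Re_Ln_pos_lt_imp u0 by blast
  have ac: "0 < arccos (1/b)" "arccos (1/b) \<le> pi/2" proof -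
    have "-1 < 1/b" "1/b < 1" "0 \<le> 1/b" "1/b \<le> 1" using b by (auto simp: field_simps)
    thus "0 < arccos (1/b)" "arccos (1/b) \<le> pi/2" using arccos_lt_bounded[of "1/b"] arccos_le_pi2[of "1/b"]
      by blast+
  qed
  have bpos: "\<beta> > 0" "\<beta> \<le> 1" unfolding bt using ac pi_gt_zero
    by (simp, subst divide_le_eq_1_pos, auto)
  show "cmod v = cmod (1 - z) powr \<beta>" unfolding v_def using unz
    by (simp add: Re_Ln powr_def)
  thus "cmod v > 0" using unz by simp
  have "Re v = cmod v * cos (\<beta> * Im (Ln (1 - z)))" unfolding v_def
    by (simp add: Re_exp)
  moreover have "cos (\<beta> * Im (Ln (1 - z))) \<ge> 1 / b"
  proof -
    have "\<bar>\<beta> * Im (Ln (1 - z))\<bar> \<le> \<beta> * (pi/2)" using im bpos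
      by (simp add: abs_mult mult_left_mono)
    also have "\<dots> = arccos (1/b)" using bt by simp
    finally have le: "\<bar>\<beta> * Im (Ln (1 - z))\<bar> \<le> arccos (1/b)" .
    have "cos (arccos (1/b)) \<le> cos \<bar>\<beta> * Im (Ln (1 - z))\<bar>"
      by (rule cos_monotone_0_pi_le) (use le ac in auto)
    moreover have "cos (arccos (1/b)) = 1/b" proof -
      have "0 < 1/b" "1/b \<le> 1" using b by auto
      thus ?thesis by (intro cos_arccos; linarith)
    qed
    ultimately show ?thesis by simp
  qed
  ultimately have "Re v \<ge> cmod v * (1/b)" by (metis mult_left_mono norm_ge_zero)
  thus "b * Re v \<ge> cmod v" using b by (simp add: field_simps)
qed

lemma Wprops:
  fixes b :: real and v :: complex
  assumes b: "b > 1" and bv: "b * Re v \<ge> cmod v" and vp: "cmod v > 0"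
  defines "w \<equiv> complex_of_real ((b - 1) / b) * v / (1 + v)"
  shows "cmod w \<le> cmod v" "cmod w < b / 2 * (1 - (cmod (1 - w))\<^sup>2)" "cmod (1 - w) < 1"
proof -
  define e where "e = (b - 1) / b"
  have e: "0 < e" "e < 1" using b by (auto simp: e_def field_simps)
  define x where "x = Re v"
  define p where "p = cmod v"
  define q where "q = cmod (1 + v)"
  have xp: "b * x \<ge> p" using bv by (simp add: x_def p_def)
  have "0 < b * x" using xp vp unfolding p_def by linarith
  hence x0: "x > 0" using b zero_less_mult_pos[of b x] by simp
  have q1: "q \<ge> 1 + x" unfolding q_def x_def using complex_Re_le_cmod[of "1+v"] by simp
  have qp: "q \<le> 1 + p" unfolding q_def p_def using norm_triangle_ineq[of 1 v] by simp
  have q0: "q > 0" using q1 x0 by simp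
  have p2: "p\<^sup>2 = x\<^sup>2 + (Im v)\<^sup>2" unfolding p_def x_def by (simp add: cmod_power2)
  have q2: "q\<^sup>2 = (1 + x)\<^sup>2 + (Im v)\<^sup>2" unfolding q_def x_def by (simp add: cmod_power2)
  have "cmod w = \<bar>e\<bar> * p / q" unfolding w_def e_def[symmetric] p_def q_def
    by (simp only: norm_divide norm_mult norm_of_real)
  hence nw: "cmod w = e * p / q" using e by simp
  have rw: "Re w = e * (x + p\<^sup>2) / q\<^sup>2"
  proof -
    have "Re w = (e * Re v * (1 + Re v) + e * Im v * Im v) / ((1 + Re v)\<^sup>2 + (Im v)\<^sup>2)"
      unfolding w_def e_def[symmetric] by (simp add: Re_divide power2_eq_square algebra_simps)
    also have "(1 + Re v)\<^sup>2 + (Im v)\<^sup>2 = q\<^sup>2" using q2 x_def by simp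
    also have "e * Re v * (1 + Re v) + e * Im v * Im v = e * (x + p\<^sup>2)"
      using p2 x_def by (simp add: power2_eq_square algebra_simps)
    finally show ?thesis .
  qed
  show "cmod w \<le> cmod v"
  proof -
    have "e * p / q \<le> p / 1"
      using e q1 x0 p_def vp by (intro frac_le) (auto intro: mult_left_le_one_le)
    thus ?thesis using nw p_def by simp
  qed
  have id: "1 - (cmod (1 - w))\<^sup>2 = 2 * Re w - (cmod w)\<^sup>2"
    by (simp only: cmod_power2) (simp add: power2_eq_square algebra_simps)
  have key: "p * q < b * (x + p\<^sup>2) - b / 2 * e * p\<^sup>2"
  proof -
    have "p * q \<le> p * (1 + p)" using qp vp p_def by (simp add: mult_left_mono)
    also have "\<dots> \<le> b * x + p\<^sup>2" using xp by (simp add: power2_eq_square algebra_simps)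
    also have "\<dots> < b * (x + p\<^sup>2) - b / 2 * e * p\<^sup>2"
    proof -
      have "p\<^sup>2 > 0" using vp p_def by simp
      moreover have "b - b / 2 * e - 1 > 0" using b unfolding e_def by (simp add: field_simps)
      ultimately have "(b - b / 2 * e - 1) * p\<^sup>2 > 0" by simp
      thus ?thesis by (simp add: algebra_simps)
    qed
    finally show ?thesis .
  qed
  have main: "cmod w < b * Re w - b / 2 * (cmod w)\<^sup>2"
  proof -
    have "e * (p * q) < e * (b * (x + p\<^sup>2) - b / 2 * e * p\<^sup>2)"
      using key e by simp
    hence "e * (p * q) / q\<^sup>2 < e * (b * (x + p\<^sup>2) - b / 2 * e * p\<^sup>2) / q\<^sup>2"
      using q0 by (simp add: divide_strict_right_mono)
    moreover have "cmod w = e * (p * q) / q\<^sup>2" using nw q0 by (simp add: power2_eq_square)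
    moreover have "b * Re w - b / 2 * (cmod w)\<^sup>2 = e * (b * (x + p\<^sup>2) - b / 2 * e * p\<^sup>2) / q\<^sup>2"
      unfolding rw nw using q0 by (simp add: power2_eq_square field_simps)
    ultimately show ?thesis by simp
  qed
  show "cmod w < b / 2 * (1 - (cmod (1 - w))\<^sup>2)"
    using main unfolding id by (simp add: algebra_simps)
  show "cmod (1 - w) < 1"
  proof -
    have "0 \<le> cmod w" by simp
    hence "b / 2 * (cmod w)\<^sup>2 < b * Re w" using main by linarith
    hence "(cmod w)\<^sup>2 < 2 * Re w" using b by (simp add: field_simps)
    hence "(cmod (1 - w))\<^sup>2 < 1" using id by simp
    thus ?thesis by (simp add: power_less_one_iff abs_le_iff)
  qed
qed


lemma dyadic_exists:
  fixes r :: real assumes "0 \<le> r" "r < 1"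
  shows "\<exists>k. 1 - (1/2)^k \<le> r \<and> r < 1 - (1/2)^(Suc k)"
proof -
  obtain n where n: "(1/2::real)^n < 1 - r" using real_arch_pow_inv[of "1 - r" "1/2"] assms by auto
  have ex: "\<exists>m. r < 1 - (1/2::real)^(Suc m)"
  proof -
    have "(1/2::real)^(Suc n) \<le> (1/2)^n" by (simp add: power_decreasing)
    thus ?thesis using n by (intro exI[of _ n]) linarith
  qed
  define k where "k = (LEAST m. r < 1 - (1/2::real)^(Suc m))"
  have k1: "r < 1 - (1/2::real)^(Suc k)" unfolding k_def by (rule LeastI_ex[OF ex])
  have k2: "1 - (1/2::real)^k \<le> r"
  proof (cases k)
    case 0 thus ?thesis using assms by simp
  next
    case (Suc m)
    have "\<not> r < 1 - (1/2::real)^(Suc m)"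
      using not_less_Least[of m "\<lambda>m. r < 1 - (1/2::real)^(Suc m)"] Suc k_def by auto
    thus ?thesis using Suc by simp
  qed
  show ?thesis using k1 k2 by blast
qed

lemma ennreal_le_suminf: "(f :: nat \<Rightarrow> ennreal) i \<le> (\<Sum>j. f j)"
  using sum_le_suminf[of f "{i}"] by simp

lemma weight_finite:
  fixes \<alpha> c :: real
  assumes a: "\<alpha> > -1" and c: "c \<ge> 0"
  shows "(\<integral>\<^sup>+z. ennreal (indicator (ball (0::complex) 1) z * c * (1 - (cmod z)\<^sup>2) powr \<alpha>) \<partial>lborel) < \<infinity>"
proof (cases "\<alpha> \<ge> 0")
  case True
  have "(\<integral>\<^sup>+z. ennreal (indicator (ball (0::complex) 1) z * c * (1 - (cmod z)\<^sup>2) powr \<alpha>) \<partial>lborel)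
      \<le> (\<integral>\<^sup>+z. ennreal c * indicator (ball (0::complex) 1) z \<partial>lborel)"
  proof (intro nn_integral_mono)
    fix z :: complex
    show "ennreal (indicator (ball 0 1) z * c * (1 - (cmod z)\<^sup>2) powr \<alpha>) \<le> ennreal c * indicator (ball 0 1) z"
    proof (cases "z \<in> ball 0 1")
      case True
      hence "0 \<le> 1 - (cmod z)\<^sup>2" "1 - (cmod z)\<^sup>2 \<le> 1" by (auto simp: abs_square_le_1)
      hence "(1 - (cmod z)\<^sup>2) powr \<alpha> \<le> 1" using \<open>\<alpha> \<ge> 0\<close> powr_mono2[of \<alpha> "1 - (cmod z)\<^sup>2" 1] by simp
      hence "c * (1 - (cmod z)\<^sup>2) powr \<alpha> \<le> c" using c by (simp add: mult_left_le)
      thus ?thesis using True by (simp add: ennreal_leI)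
    qed simp
  qed
  also have "\<dots> = ennreal c * emeasure lborel (ball (0::complex) 1)"
    by (simp add: nn_integral_cmult_indicator)
  also have "\<dots> < \<infinity>" by (simp add: emeasure_ball ennreal_mult_less_top)
  finally show ?thesis .
next
  case False
  hence an: "\<alpha> < 0" by simp
  define A :: "nat \<Rightarrow> complex set" where "A k = ball 0 (1 - (1/2)^(Suc k)) - ball 0 (1 - (1/2)^k)" for k
  define M :: "nat \<Rightarrow> real" where "M k = c * ((1/2) powr \<alpha>)^(Suc k)" for k
  define q :: real where "q = (1/2) powr \<alpha> / 2"
  have Amb: "A k \<in> sets lborel" for k unfolding A_def by simp
  have pt: "ennreal (indicator (ball (0::complex) 1) z * c * (1 - (cmod z)\<^sup>2) powr \<alpha>)
      \<le> (\<Sum>k. ennreal (M k) * indicator (A k) z)" for z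
  proof (cases "z \<in> ball 0 1")
    case True
    hence z1: "cmod z < 1" by simp
    obtain k where k: "1 - (1/2)^k \<le> cmod z" "cmod z < 1 - (1/2)^(Suc k)"
      using dyadic_exists[of "cmod z"] z1 by auto
    have zA: "z \<in> A k" unfolding A_def using k by auto
    have "(1/2::real)^(Suc k) \<le> 1 - cmod z" using k by simp
    also have "\<dots> \<le> 1 - (cmod z)\<^sup>2" using z1 by (simp add: power2_eq_square mult_le_cancel_right1 mult_left_le)
    finally have le: "(1/2::real)^(Suc k) \<le> 1 - (cmod z)\<^sup>2" .
    have "(1 - (cmod z)\<^sup>2) powr \<alpha> \<le> ((1/2::real)^(Suc k)) powr \<alpha>"
      by (rule powr_mono2') (use an le in auto)
    also have "\<dots> = ((1/2) powr \<alpha>)^(Suc k)"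
    proof -
      have "((1/2::real)^(Suc k)) powr \<alpha> = ((1/2::real) powr (real (Suc k))) powr \<alpha>"
        by (subst powr_realpow) auto
      also have "\<dots> = (1/2) powr (real (Suc k) * \<alpha>)" by (simp add: powr_powr)
      also have "\<dots> = ((1/2) powr \<alpha>)^(Suc k)" by (subst powr_power) auto
      finally show ?thesis .
    qed
    finally have "c * (1 - (cmod z)\<^sup>2) powr \<alpha> \<le> M k" unfolding M_def using c by (simp add: mult_left_mono)
    hence "ennreal (indicator (ball (0::complex) 1) z * c * (1 - (cmod z)\<^sup>2) powr \<alpha>) \<le> ennreal (M k) * indicator (A k) z"
      using True zA by (simp add: ennreal_leI)
    also have "\<dots> \<le> (\<Sum>k. ennreal (M k) * indicator (A k) z)" by (rule ennreal_le_suminf)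
    finally show ?thesis .
  qed simp
  have "(\<integral>\<^sup>+z. ennreal (indicator (ball (0::complex) 1) z * c * (1 - (cmod z)\<^sup>2) powr \<alpha>) \<partial>lborel)
      \<le> (\<integral>\<^sup>+z. (\<Sum>k. ennreal (M k) * indicator (A k) z) \<partial>lborel)"
    by (intro nn_integral_mono pt)
  also have "\<dots> = (\<Sum>k. \<integral>\<^sup>+z. ennreal (M k) * indicator (A k) z \<partial>lborel)"
    by (rule nn_integral_suminf) (use Amb in auto)
  also have "\<dots> = (\<Sum>k. ennreal (M k) * emeasure lborel (A k))"
    using Amb by (simp add: nn_integral_cmult_indicator)
  also have "\<dots> \<le> (\<Sum>k. ennreal (c * pi * (1/2) powr \<alpha> * q ^ k))"
  proof (intro suminf_le summableI)
    fix k
    define r1 :: real where "r1 = 1 - (1/2)^k"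
    define r2 :: real where "r2 = 1 - (1/2)^(Suc k)"
    have r: "0 \<le> r1" "r1 \<le> r2" "r2 \<le> 1" unfolding r1_def r2_def
      by (auto simp: power_le_one)
    have "emeasure lborel (A k) = emeasure lborel (ball (0::complex) r2) - emeasure lborel (ball (0::complex) r1)"
      unfolding A_def r1_def[symmetric] r2_def[symmetric]
      by (rule emeasure_Diff) (use r in \<open>auto simp: emeasure_ball\<close>)
    also have "\<dots> = ennreal (pi * r2^2) - ennreal (pi * r1^2)"
      using r by (simp add: emeasure_ball eval_unit_ball_vol)
    also have "\<dots> = ennreal (pi * r2^2 - pi * r1^2)" by (rule ennreal_minus) simp
    also have "\<dots> \<le> ennreal (pi * (1/2)^k)"
    proof (rule ennreal_leI)
      have "r2^2 - r1^2 = (r2 - r1) * (r2 + r1)" by (simp add: power2_eq_square algebra_simps)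
      also have "\<dots> \<le> (r2 - r1) * 2" using r by (intro mult_left_mono) auto
      also have "\<dots> = (1/2)^k" unfolding r1_def r2_def by simp
      finally have "r2^2 - r1^2 \<le> (1/2)^k" .
      show "pi * r2^2 - pi * r1^2 \<le> pi * (1/2)^k"
      proof -
        have "pi * r2^2 - pi * r1^2 = pi * (r2^2 - r1^2)" by (simp add: right_diff_distrib)
        also have "\<dots> \<le> pi * (1/2)^k" using \<open>r2^2 - r1^2 \<le> (1/2)^k\<close> by (intro mult_left_mono) auto
        finally show ?thesis .
      qed
    qed
    finally have em: "emeasure lborel (A k) \<le> ennreal (pi * (1/2)^k)" .
    have "ennreal (M k) * emeasure lborel (A k) \<le> ennreal (M k) * ennreal (pi * (1/2)^k)"
      by (rule mult_left_mono[OF em]) simp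
    also have "\<dots> = ennreal (M k * (pi * (1/2)^k))"
      using c unfolding M_def by (intro ennreal_mult[symmetric]) auto
    also have "M k * (pi * (1/2)^k) = c * pi * (1/2) powr \<alpha> * q ^ k"
      unfolding M_def q_def by (simp add: power_divide power_Suc)
    finally show "ennreal (M k) * emeasure lborel (A k) \<le> ennreal (c * pi * (1/2) powr \<alpha> * q ^ k)" .
  qed
  also have "\<dots> < \<infinity>"
  proof -
    have h2: "(1/2::real) powr \<alpha> = 2 powr (-\<alpha>)"
      by (simp add: powr_minus_divide powr_divide)
    have "(2::real) powr (-\<alpha>) < 2 powr 1" using a by (intro powr_less_mono) auto
    hence q: "0 \<le> q" "q < 1" unfolding q_def h2 by auto
    have "summable (\<lambda>k. c * pi * (1/2) powr \<alpha> * q ^ k)"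
      using q by (intro summable_mult summable_geometric) simp
    thus ?thesis using q c by (simp add: ennreal_suminf_neq_top top.not_eq_extremum)
  qed
  finally show ?thesis .
qed


lemma f_meas: "(\<lambda>z::complex. ennreal (indicator (ball (0::complex) 1) z * c * (1 - (cmod z)\<^sup>2) powr \<alpha>)) \<in> borel_measurable lborel"
  by (intro borel_measurable_continuous_onI measurable_compose[OF _ measurable_ennreal]
      borel_measurable_times borel_measurable_indicator powr_real_measurable
      borel_measurable_const borel_measurable_diff borel_measurable_power borel_measurable_norm
      measurable_ident_sets) auto

lemma lower:
  fixes \<alpha> t :: real
  assumes "\<alpha> > -1" "0 < t" "t < 1"
  shows "ennreal (c_alpha \<alpha> * min ((1/2) powr \<alpha>) (3 powr \<alpha>) * t powr \<alpha> * (pi * (t/2)^2))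
     \<le> emeasure (v_alpha \<alpha>) (ball (1 - complex_of_real t) (t/2))"
proof -
  define c where "c = c_alpha \<alpha>"
  have c: "c > 0" using assms unfolding c_def c_alpha_def by simp
  define K where "K = c * min ((1/2) powr \<alpha>) (3 powr \<alpha>) * t powr \<alpha>"
  define B where "B = ball (1 - complex_of_real t) (t/2)"
  have Bm: "B \<in> sets lborel" unfolding B_def by simp
  have pt: "ennreal K * indicator B z \<le> ennreal (indicator (ball (0::complex) 1) z * c * (1 - (cmod z)\<^sup>2) powr \<alpha>) * indicator B z" for z
  proof (cases "z \<in> B")
    case True
    hence d: "cmod (z - (1 - complex_of_real t)) < t/2" unfolding B_def by (simp add: dist_norm norm_minus_commute)
    have n1: "cmod (1 - complex_of_real t) = 1 - t" proof -
      have "1 - complex_of_real t = complex_of_real (1 - t)" by simp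
      thus ?thesis using assms by (simp only: norm_of_real)
    qed
    have hz1: "cmod z < 1 - t/2"
      using norm_triangle_sub[of z "1 - complex_of_real t"] d n1 by linarith
    have hz2: "cmod z > 1 - 3*t/2"
      using norm_triangle_sub[of "1 - complex_of_real t" z] d n1 by (simp add: norm_minus_commute)
    have zb: "z \<in> ball 0 1" using hz1 assms by simp
    have eq: "1 - (cmod z)\<^sup>2 = (1 - cmod z) * (1 + cmod z)" by (simp add: power2_eq_square algebra_simps)
    have lo: "t/2 \<le> 1 - (cmod z)\<^sup>2"
    proof -
      have "t/2 * 1 \<le> (1 - cmod z) * (1 + cmod z)" using hz1 assms by (intro mult_mono) auto
      thus ?thesis using eq by simp
    qed
    have hi: "1 - (cmod z)\<^sup>2 \<le> 3 * t"
    proof -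
      have "(1 - cmod z) * (1 + cmod z) \<le> (3*t/2) * 2" using hz1 hz2 assms by (intro mult_mono) auto
      thus ?thesis using eq by simp
    qed
    have tp: "0 < t/2" using assms by simp
    have w: "min ((1/2) powr \<alpha>) (3 powr \<alpha>) * t powr \<alpha> \<le> (1 - (cmod z)\<^sup>2) powr \<alpha>"
    proof (cases "\<alpha> \<ge> 0")
      case True
      have "min ((1/2) powr \<alpha>) (3 powr \<alpha>) * t powr \<alpha> \<le> (1/2) powr \<alpha> * t powr \<alpha>"
        by (intro mult_right_mono) auto
      also have "\<dots> = (t/2) powr \<alpha>" using assms by (simp add: powr_mult[symmetric] powr_divide)
      also have "\<dots> \<le> (1 - (cmod z)\<^sup>2) powr \<alpha>" using True lo tp by (intro powr_mono2) auto
      finally show ?thesis .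
    next
      case False
      have "min ((1/2) powr \<alpha>) (3 powr \<alpha>) * t powr \<alpha> \<le> 3 powr \<alpha> * t powr \<alpha>"
        by (intro mult_right_mono) auto
      also have "\<dots> = (3 * t) powr \<alpha>" using assms by (simp add: powr_mult)
      also have "\<dots> \<le> (1 - (cmod z)\<^sup>2) powr \<alpha>" using False lo hi tp by (intro powr_mono2') auto
      finally show ?thesis .
    qed
    have "K \<le> c * (1 - (cmod z)\<^sup>2) powr \<alpha>" unfolding K_def using w c
      by (simp add: mult.assoc mult_left_mono)
    thus ?thesis using True zb by (simp add: ennreal_leI)
  qed simp
  have K0: "K \<ge> 0" unfolding K_def using c by simp
  have "ennreal (K * (pi * (t/2)^2)) = ennreal K * ennreal (pi * (t/2)^2)"
    using K0 by (intro ennreal_mult) auto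
  also have "\<dots> = (\<integral>\<^sup>+z. ennreal K * indicator B z \<partial>lborel)"
    using Bm assms by (simp add: nn_integral_cmult_indicator B_def emeasure_ball eval_unit_ball_vol)
  also have "\<dots> \<le> (\<integral>\<^sup>+z. ennreal (indicator (ball (0::complex) 1) z * c * (1 - (cmod z)\<^sup>2) powr \<alpha>) * indicator B z \<partial>lborel)"
    by (intro nn_integral_mono pt)
  also have "\<dots> = emeasure (v_alpha \<alpha>) B"
    unfolding v_alpha_def c_def by (rule emeasure_density[symmetric]) (use Bm f_meas in auto)
  finally show ?thesis unfolding K_def B_def c_def
    by (simp add: mult.assoc)
qed

theorem lemma3p9:
  fixes \<alpha> b :: real
  assumes "\<alpha> > -1" and "b > 1"
  shows "\<exists>(\<phi> :: complex \<Rightarrow> complex) C.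
           \<phi> holomorphic_on ball 0 1 \<and> \<phi> ` ball 0 1 \<subseteq> ball 0 1 \<and>
           \<phi> ` ball 0 1 \<subseteq> Gamma_region 1 b \<and> C > 0 \<and>
           (\<forall>\<^sub>F h in at_right 0.
              measure (v_alpha \<alpha>) {z \<in> ball 0 1. \<phi> z \<in> S_region 1 h}
                \<ge> C * h powr ((2 + \<alpha>) / beta_of b))"
proof -
  define \<beta> where "\<beta> = beta_of b"
  have bt: "\<beta> = 2 * arccos (1 / b) / pi" unfolding \<beta>_def beta_of_def ..
  have bpos: "\<beta> > 0"
  proof -
    have "-1 < 1/b" "1/b < 1" using assms by (auto simp: field_simps)
    hence "0 < arccos (1/b)" using arccos_lt_bounded[of "1/b"] by blast
    thus ?thesis unfolding bt by simp
  qed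
  define V where "V z = exp (complex_of_real \<beta> * Ln (1 - z))" for z
  define \<phi> where "\<phi> z = 1 - complex_of_real ((b - 1) / b) * V z / (1 + V z)" for z
  have VP: "cmod (V z) = cmod (1 - z) powr \<beta>" "b * Re (V z) \<ge> cmod (V z)" "cmod (V z) > 0"
    if "cmod z < 1" for z
    using Vprops[OF assms(2) bt that] unfolding V_def by auto
  have WP: "cmod (1 - \<phi> z) \<le> cmod (V z)" "cmod (1 - \<phi> z) < b / 2 * (1 - (cmod (\<phi> z))\<^sup>2)"
     "cmod (\<phi> z) < 1" if "cmod z < 1" for z
    using Wprops[OF assms(2) VP(2)[OF that] VP(3)[OF that]] unfolding \<phi>_def by auto
  have Re1: "Re (1 - z) > 0" if "cmod z < 1" for z :: complex
    using that complex_Re_le_cmod[of z] by simp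
  have hol: "\<phi> holomorphic_on ball 0 1"
  proof -
    have "V holomorphic_on ball 0 1" unfolding V_def
    proof (intro holomorphic_intros)
      fix z :: complex assume "z \<in> ball 0 1"
      hence "Re (1 - z) > 0" using Re1 by simp
      thus "1 - z \<notin> \<real>\<^sub>\<le>\<^sub>0" by (auto simp: complex_nonpos_Reals_iff)
    qed
    moreover have "1 + V z \<noteq> 0" if "z \<in> ball 0 1" for z
    proof -
      have "cmod z < 1" using that by simp
      from VP[OF this] assms(2) have "Re (V z) > 0"
        by (metis less_le_trans mult_pos_pos zero_less_mult_pos less_trans zero_less_one)
      hence "Re (1 + V z) > 0" by simp
      thus ?thesis by (metis zero_complex.sel(1) less_irrefl)
    qed
    ultimately show ?thesis unfolding \<phi>_def by (intro holomorphic_intros) auto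
  qed
  have img1: "\<phi> ` ball 0 1 \<subseteq> ball 0 1" using WP(3) by auto
  have img2: "\<phi> ` ball 0 1 \<subseteq> Gamma_region 1 b"
    using WP unfolding Gamma_region_def by auto
  define c where "c = c_alpha \<alpha>"
  have c: "c > 0" using assms unfolding c_def c_alpha_def by simp
  define k0 where "k0 = min ((1/2) powr \<alpha>) (3 powr \<alpha>)"
  have k0: "k0 > 0" unfolding k0_def by simp
  define p where "p = (2 + \<alpha>) / \<beta>"
  define C where "C = c * k0 * (pi / 4) * (2/3) powr (2 + \<alpha>) / 2 powr p"
  have Cpos: "C > 0" unfolding C_def using c k0 by simp
  have fin: "finite_measure (v_alpha \<alpha>)"
  proof
    have "emeasure (v_alpha \<alpha>) (space (v_alpha \<alpha>))
        = (\<integral>\<^sup>+z. ennreal (indicator (ball (0::complex) 1) z * c * (1 - (cmod z)\<^sup>2) powr \<alpha>) * indicator UNIV z \<partial>lborel)"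
      unfolding v_alpha_def c_def by (subst emeasure_density) (use f_meas in auto)
    also have "\<dots> = (\<integral>\<^sup>+z. ennreal (indicator (ball (0::complex) 1) z * c * (1 - (cmod z)\<^sup>2) powr \<alpha>) \<partial>lborel)"
      by simp
    also have "\<dots> < \<infinity>" using weight_finite[OF assms(1), of c] c by simp
    finally show "emeasure (v_alpha \<alpha>) (space (v_alpha \<alpha>)) \<noteq> \<infinity>" by simp
  qed
  have ev: "\<forall>\<^sub>F h in at_right 0.
      measure (v_alpha \<alpha>) {z \<in> ball 0 1. \<phi> z \<in> S_region 1 h} \<ge> C * h powr p"
  proof (rule eventually_mono[OF eventually_at_right_real[of 0 1]])
    fix h :: real assume h: "h \<in> {0<..<1}"
    define A where "A = {z \<in> ball 0 1. \<phi> z \<in> S_region 1 h}"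
    define s where "s = (h/2) powr (1/\<beta>)"
    define t where "t = 2/3 * s"
    have s0: "0 < s" unfolding s_def using h by simp
    have "(h/2) powr (1/\<beta>) < 1 powr (1/\<beta>)" using h bpos by (intro powr_less_mono2) auto
    hence s: "0 < s" "s < 1" using s0 unfolding s_def by auto
    have t: "0 < t" "t < 1" unfolding t_def using s by auto
    have sb: "s powr \<beta> = h/2" unfolding s_def using h bpos by (simp add: powr_powr)
    have Aopen: "open A"
    proof -
      have "continuous_on (ball 0 1) \<phi>" by (rule holomorphic_on_imp_continuous_on[OF hol])
      hence "open (ball 0 1 \<inter> \<phi> -` S_region 1 h)"
      proof (rule continuous_open_preimage)
        have "S_region 1 h = ball 0 1 \<inter> ball 1 h" unfolding S_region_def by (auto simp: dist_norm)
        thus "open (S_region 1 h)" by (simp add: open_Int)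
      qed simp
      moreover have "A = ball 0 1 \<inter> \<phi> -` S_region 1 h" unfolding A_def by auto
      ultimately show ?thesis by simp
    qed
    have Am: "A \<in> sets (v_alpha \<alpha>)" unfolding v_alpha_def using Aopen by simp
    have BA: "ball (1 - complex_of_real t) (t/2) \<subseteq> A"
    proof
      fix z assume "z \<in> ball (1 - complex_of_real t) (t/2)"
      hence d: "cmod (z - (1 - complex_of_real t)) < t/2" by (simp add: dist_norm norm_minus_commute)
      have n1: "cmod (1 - complex_of_real t) = 1 - t"
      proof -
        have "1 - complex_of_real t = complex_of_real (1 - t)" by simp
        thus ?thesis using t by (simp only: norm_of_real)
      qed
      have z1: "cmod z < 1"
        using norm_triangle_sub[of z "1 - complex_of_real t"] d n1 t by linarith
      have "cmod (1 - z) \<le> cmod (complex_of_real t) + cmod (z - (1 - complex_of_real t))"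
        using norm_triangle_ineq[of "complex_of_real t" "-(z - (1 - complex_of_real t))"]
        by (simp add: algebra_simps norm_minus_commute)
      hence z2: "cmod (1 - z) \<le> s" using d t unfolding t_def by simp
      have "cmod (1 - \<phi> z) \<le> cmod (1 - z) powr \<beta>" using WP(1)[OF z1] VP(1)[OF z1] by simp
      also have "\<dots> \<le> s powr \<beta>" using z2 bpos by (intro powr_mono2) auto
      also have "\<dots> < h" using sb h by simp
      finally have "cmod (1 - \<phi> z) < h" .
      thus "z \<in> A" unfolding A_def S_region_def using z1 WP(3)[OF z1] by (simp add: dist_norm)
    qed
    have L: "ennreal (c * k0 * t powr \<alpha> * (pi * (t/2)^2)) \<le> emeasure (v_alpha \<alpha>) A"
    proof -
      have "ennreal (c * k0 * t powr \<alpha> * (pi * (t/2)^2)) \<le> emeasure (v_alpha \<alpha>) (ball (1 - complex_of_real t) (t/2))"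
        using lower[OF assms(1) t] unfolding c_def k0_def .
      also have "\<dots> \<le> emeasure (v_alpha \<alpha>) A" using BA Am by (intro emeasure_mono) auto
      finally show ?thesis .
    qed
    have eqL: "c * k0 * t powr \<alpha> * (pi * (t/2)^2) = C * h powr p"
    proof -
      have "t powr \<alpha> * (t/2)^2 = t powr (2 + \<alpha>) / 4"
        using t by (simp add: powr_add power2_eq_square powr_numeral)
      also have "t powr (2 + \<alpha>) = (2/3) powr (2 + \<alpha>) * (h / 2) powr p"
      proof -
        have "t powr (2 + \<alpha>) = (2/3) powr (2 + \<alpha>) * s powr (2 + \<alpha>)"
          unfolding t_def using powr_mult[of "2/3" s "2 + \<alpha>"] s by simp
        also have "s powr (2 + \<alpha>) = (h/2) powr (1/\<beta> * (2 + \<alpha>))"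
          unfolding s_def by (simp add: powr_powr)
        also have "1/\<beta> * (2 + \<alpha>) = p" unfolding p_def by simp
        finally show ?thesis .
      qed
      also have "(h/2) powr p = h powr p / 2 powr p" using h by (simp add: powr_divide)
      finally have "t powr \<alpha> * (t/2)^2 = (2/3) powr (2 + \<alpha>) * (h powr p / 2 powr p) / 4" .
      thus ?thesis unfolding C_def by (simp add: field_simps)
    qed
    have "ennreal (C * h powr p) \<le> ennreal (measure (v_alpha \<alpha>) A)"
      using L eqL finite_measure.emeasure_eq_measure[OF fin] by simp
    thus "measure (v_alpha \<alpha>) {z \<in> ball 0 1. \<phi> z \<in> S_region 1 h} \<ge> C * h powr p"
      unfolding A_def by (simp add: ennreal_le_iff)
  qed simp
  show ?thesis
    using hol img1 img2 Cpos ev unfolding p_def \<beta>_def by blast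
qed

end
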